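(* Let $D=\sum_{s=1}^N\gamma_s\varpi_{i_s}[\mathsf x_s]+\mu^+[\infty]+\mu^-[0]$ be a trigonometric $\Lambda^+$-valued divisor satisfying the integrality assumption with $1\le i_N\le n-1$ (so $\gamma_N=1$), and let $D''=\sum_{s=1}^{N-1}\gamma_s\varpi_{i_s}[\mathsf x_s]+\mu^+[\infty]+(\mu^-+\varpi_{i_N})[0]$. Then, treating $\mathsf x_N$ as a parameter, the limit of $T_D(z)$ as $\mathsf x_N\to0$ equals $T_{D''}(z)$.
   Context: Let $n\ge2$, $\Lambda=\bigoplus_{j=1}^n\mathbb{Z}\epsilon_j$, $\epsilon^\vee_j$ dual basis, $\alpha^\vee_i=\epsilon^\vee_i-\epsilon^\vee_{i+1}$, $\alpha_i=\epsilon_i-\epsilon_{i+1}$, $\varpi_i=-\sum_{j>i}\epsilon_j$ ($0\le i\le n-1$), $\Lambda^+=\{\nu:\alpha^\vee_i(\nu)\ge0\ \forall i\}$. A trigonometric $\Lambda^+$-valued divisor: $D=\sum_{s=1}^N\gamma_s\varpi_{i_s}[\mathsf x_s]+\mu^+[\infty]+\mu^-[0]$, $0\le i_s\le n-1$, $\mathsf x_s\in\mathbb{C}^\times$, $\gamma_s=1$ if $i_s\ne0$, $\gamma_s\in\{\pm1\}$ if $i_s=0$, $\mu^\pm\in\Lambda^+$; $\lambda=\sum_s\gamma_s\varpi_{i_s}$, $\lambda_{\mathsf x}=\sum_{s:\mathsf x_s=\mathsf x}\gamma_s\varpi_{i_s}$ (for $\mathsf x\in\mathbb{C}^\times$). Integrality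 assumption: $\lambda+\mu^++\mu^-=\sum_{i=1}^{n-1}a_i\alpha_i$, $a_i\in\mathbb{Z}_{\ge0}$; $a_0=a_n=0$ ($D$ and $D''$ give the same $a_i$). $\widetilde{\mathcal A}^v$: the $\mathbb{C}[v,v^{-1}]$-algebra generated by $D_{i,r}^{\pm1},\mathsf w_{i,r}^{\pm1/2},(\mathsf w_{i,r}-v^m\mathsf w_{i,s})^{-1},(1-v^l)^{-1}$ ($1\le i<n$, $1\le r\ne s\le a_i$, $m\in\mathbb{Z}$, $l\ne0$) with $D_{i,r}\mathsf w^{1/2}_{j,s}=v^{\delta_{ij}\delta_{rs}}\mathsf w^{1/2}_{j,s}D_{i,r}$, $D$'s commuting, $\mathsf w^{1/2}$'s commuting, obvious inverse relations; $\mathsf w_{i,r}=(\mathsf w^{1/2}_{i,r})^2$. $\mathsf Z_i(z)=\prod_{s:i_s=i}(1-v^{-i}\mathsf x_s/z)^{\gamma_s}$, $\mathsf W_j(z)=\prod_{r=1}^{a_j}(1-\mathsf w_{j,r}/z)$, $\mathsf W_{j,r}(z)=\prod_{s\ne r}(1-\mathsf w_{j,s}/z)$, $\mathsf W_0=\mathsf W_n=1$. Trigonometric Lax matrix of $D$: $T_D(z)_{\alpha\beta}=\sum_{i=1}^{\min(\alpha,\beta)}f^D_{\alpha i}(z)g^D_i(z)e^D_{i\beta}(z)$ (rational in $z$), $e^D_{ii}=f^D_{ii}=1$, with $g^D_i(z)=\prod_{t=1}^{a_i}\mathsf w_{i,t}^{-1/2}\prod_{t=1}^{a_{i-1}}\mathsf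 w_{i-1,t}^{1/2}\, z^{\epsilon^\vee_i(\mu^+)}\frac{\mathsf W_i(v^{-i}z)}{\mathsf W_{i-1}(v^{-i-1}z)}\prod_{\mathsf x\in\mathbb{C}^\times}(1-\mathsf x/z)^{-\epsilon^\vee_i(\lambda_{\mathsf x})}$; for $i<j$: $e^D_{ij}(z)=(-1)^{i-j+1}\prod_{t=1}^{a_{j-1}}\mathsf w_{j-1,t}\prod_{k=i}^{j-2}\prod_{t=1}^{a_k}\mathsf w_{k,t}^{1/2}\prod_{t=1}^{a_{i-1}}\mathsf w_{i-1,t}^{-1/2}\sum_{r_i,\dots,r_{j-1}}\frac{\prod_{k=i}^{j-1}(v^k\mathsf w_{k,r_k})^{-\alpha^\vee_k(\mu^+)}}{1-v^i\mathsf w_{i,r_i}/z}\cdot\frac{\mathsf W_{i-1}(v^{-1}\mathsf w_{i,r_i})\prod_{k=i}^{j-2}\mathsf W_{k,r_k}(v^{-1}\mathsf w_{k+1,r_{k+1}})}{\prod_{k=i}^{j-1}\mathsf W_{k,r_k}(\mathsf w_{k,r_k})}\prod_{k=i}^{j-1}\mathsf Z_k(\mathsf w_{k,r_k})\cdot\frac{\mathsf w_{i,r_i}}{\mathsf w_{j-1,r_{j-1}}}\prod_{k=i}^{j-1}D_{k,r_k}^{-1}$; $f^D_{ji}(z)=(-1)^{i-j+1}v^{i-j}\prod_{k=i+1}^j\prod_{t=1}^{a_k}\mathsf w_{k,t}^{-1/2}\sum_{r_i,\dots,r_{j-1}}\frac{1}{1-z/(v^{i+2}\mathsf w_{i,r_i})}\cdot\frac{\mathsf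 W_j(v\mathsf w_{j-1,r_{j-1}})\prod_{k=i+1}^{j-1}\mathsf W_{k,r_k}(v\mathsf w_{k-1,r_{k-1}})}{\prod_{k=i}^{j-1}\mathsf W_{k,r_k}(\mathsf w_{k,r_k})}\cdot\frac{\mathsf w_{j-1,r_{j-1}}}{\mathsf w_{i,r_i}}\prod_{k=i}^{j-1}D_{k,r_k}$ (sums over $1\le r_k\le a_k$); here $\mu^\pm$, $\lambda_{\mathsf x}$, $\mathsf Z_k$ are those of the divisor in question. *)

theory Defs
  imports Complex_Main
begin

text \<open>A coweight-coordinate vector nu in Lambda is represented by the function
  j -> epsilon_j^vee(nu); only the values at j in {1..n} are meaningful.
  A point of the divisor is a triple (i_s, gamma_s, x_s).\<close>

type_synonym point = "nat \<times> int \<times> complex"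

record tdiv =
  pts :: "point list"
  mup :: "nat \<Rightarrow> int"
  mum :: "nat \<Rightarrow> int"

text \<open>epsilon_j^vee(varpi_i), varpi_i = - sum_{j>i} epsilon_j\<close>
definition varpi :: "nat \<Rightarrow> nat \<Rightarrow> nat \<Rightarrow> int" where
  "varpi n i j = (if i < j \<and> j \<le> n then -1 else 0)"

text \<open>epsilon_j^vee(alpha_i), alpha_i = epsilon_i - epsilon_{i+1}\<close>
definition alpha :: "nat \<Rightarrow> nat \<Rightarrow> int" where
  "alpha i j = (if j = i then 1 else if j = Suc i then -1 else 0)"

definition dominant :: "nat \<Rightarrow> (nat \<Rightarrow> int) \<Rightarrow> bool" where
  "dominant n \<mu> \<longleftrightarrow> (\<forall>i. 1 \<le> i \<and> i < n \<longrightarrow> \<mu> i - \<mu> (Suc i) \<ge> 0)"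

definition trig_divisor :: "nat \<Rightarrow> tdiv \<Rightarrow> bool" where
  "trig_divisor n D \<longleftrightarrow> 2 \<le> n \<and>
     (\<forall>(i,\<gamma>,x) \<in> set (pts D). i < n \<and> x \<noteq> 0 \<and> (if i = 0 then \<gamma> \<in> {1,-1} else \<gamma> = 1)) \<and>
     dominant n (mup D) \<and> dominant n (mum D)"

definition lam :: "nat \<Rightarrow> tdiv \<Rightarrow> nat \<Rightarrow> int" where
  "lam n D j = (\<Sum>p\<leftarrow>pts D. fst (snd p) * varpi n (fst p) j)"

definition lamx :: "nat \<Rightarrow> tdiv \<Rightarrow> complex \<Rightarrow> nat \<Rightarrow> int" where
  "lamx n D x j = (\<Sum>p\<leftarrow>pts D. if snd (snd p) = x then fst (snd p) * varpi n (fst p) j else 0)"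

definition integ_witness :: "nat \<Rightarrow> tdiv \<Rightarrow> (nat \<Rightarrow> nat) \<Rightarrow> bool" where
  "integ_witness n D a \<longleftrightarrow> (\<forall>j\<in>{1..n}.
      lam n D j + mup D j + mum D j = (\<Sum>i\<in>{1..<n}. int (a i) * alpha i j))"

definition integral :: "nat \<Rightarrow> tdiv \<Rightarrow> bool" where
  "integral n D \<longleftrightarrow> (\<exists>a. integ_witness n D a)"

text \<open>the coefficients a_i (a_0 = a_n = 0)\<close>
definition acoef :: "nat \<Rightarrow> tdiv \<Rightarrow> nat \<Rightarrow> nat" where
  "acoef n D i = (if 1 \<le> i \<and> i < n then (SOME a. integ_witness n D a) i else 0)"

text \<open>Index (i,r) of the generators w_{i,r}^{1/2}, D_{i,r}. An element of the algebra is
  represented by a finite list of monomials c * D^k (the D's on the right), where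
  c is a coefficient function of v and of the values u(i,r) = w_{i,r}^{1/2}, and
  k : idx => int is the exponent vector of D. The relation
  D_{i,r} w^{1/2}_{j,s} = v^{delta} w^{1/2}_{j,s} D_{i,r} gives
  D^k c(u) = c(v^k u) D^k.\<close>

type_synonym idx = "nat \<times> nat"
type_synonym coeffn = "complex \<Rightarrow> (idx \<Rightarrow> complex) \<Rightarrow> complex"
type_synonym opr = "(coeffn \<times> (idx \<Rightarrow> int)) list"

definition act :: "complex \<Rightarrow> (idx \<Rightarrow> int) \<Rightarrow> (idx \<Rightarrow> complex) \<Rightarrow> idx \<Rightarrow> complex" where
  "act v k u = (\<lambda>p. v powi k p * u p)"

definition omul :: "opr \<Rightarrow> opr \<Rightarrow> opr" where
  "omul A B = concat (map (\<lambda>(a,k). map (\<lambda>(b,l).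
      ((\<lambda>v u. a v u * b v (act v k u)), (\<lambda>p. k p + l p))) B) A)"

definition oscal :: "coeffn \<Rightarrow> opr" where
  "oscal c = [(c, (\<lambda>_. 0))]"

definition ocoeff :: "opr \<Rightarrow> (idx \<Rightarrow> int) \<Rightarrow> coeffn" where
  "ocoeff A m = (\<lambda>v u. \<Sum>x\<leftarrow>A. if snd x = m then fst x v u else 0)"

definition Wfun :: "nat \<Rightarrow> tdiv \<Rightarrow> (idx \<Rightarrow> complex) \<Rightarrow> nat \<Rightarrow> complex \<Rightarrow> complex" where
  "Wfun n D u j z = (\<Prod>r\<in>{1..acoef n D j}. 1 - (u (j,r))^2 / z)"

definition Wr :: "nat \<Rightarrow> tdiv \<Rightarrow> (idx \<Rightarrow> complex) \<Rightarrow> nat \<Rightarrow> nat \<Rightarrow> complex \<Rightarrow> complex" where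
  "Wr n D u j r z = (\<Prod>s\<in>{1..acoef n D j} - {r}. 1 - (u (j,s))^2 / z)"

definition Zfun :: "tdiv \<Rightarrow> complex \<Rightarrow> nat \<Rightarrow> complex \<Rightarrow> complex" where
  "Zfun D v i z = (\<Prod>p\<leftarrow>pts D. if fst p = i
      then (1 - v powi (- int i) * snd (snd p) / z) powi (fst (snd p)) else 1)"

definition gfun :: "nat \<Rightarrow> tdiv \<Rightarrow> nat \<Rightarrow> complex \<Rightarrow> coeffn" where
  "gfun n D i z = (\<lambda>v u.
     (\<Prod>t\<in>{1..acoef n D i}. inverse (u (i,t))) * (\<Prod>t\<in>{1..acoef n D (i-1)}. u (i-1,t))
     * z powi (mup D i)
     * Wfun n D u i (v powi (- int i) * z) / Wfun n D u (i-1) (v powi (- int i - 1) * z)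
     * (\<Prod>x\<in>(\<lambda>p. snd (snd p)) ` set (pts D). (1 - x / z) powi (- lamx n D x i)))"

text \<open>index tuples (r_i,...,r_{j-1}) with 1 <= r_k <= a_k, as lists; r_k = rs ! (k - i)\<close>
definition rtuples :: "nat \<Rightarrow> tdiv \<Rightarrow> nat \<Rightarrow> nat \<Rightarrow> nat list list" where
  "rtuples n D i j = product_lists (map (\<lambda>k. [1..<Suc (acoef n D k)]) [i..<j])"

text \<open>exponent vector of prod_{k=i}^{j-1} D_{k,r_k}^{sg}\<close>
definition dshift :: "nat \<Rightarrow> nat \<Rightarrow> nat list \<Rightarrow> int \<Rightarrow> idx \<Rightarrow> int" where
  "dshift i j rs sg = (\<lambda>(p,q). if i \<le> p \<and> p < j \<and> q = rs ! (p - i) then sg else 0)"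

definition ecoef :: "nat \<Rightarrow> tdiv \<Rightarrow> nat \<Rightarrow> nat \<Rightarrow> complex \<Rightarrow> nat list \<Rightarrow> coeffn" where
  "ecoef n D i j z rs = (\<lambda>v u. let w = (\<lambda>p. (u p)^2); r = (\<lambda>k. rs ! (k - i)) in
      (-1) powi (int i - int j + 1)
      * (\<Prod>t\<in>{1..acoef n D (j-1)}. w (j-1,t))
      * (\<Prod>k\<in>{i..<j-1}. \<Prod>t\<in>{1..acoef n D k}. u (k,t))
      * (\<Prod>t\<in>{1..acoef n D (i-1)}. inverse (u (i-1,t)))
      * ((\<Prod>k\<in>{i..<j}. (v ^ k * w (k, r k)) powi (- (mup D k - mup D (Suc k))))
         / (1 - v ^ i * w (i, r i) / z)
         * (Wfun n D u (i-1) (w (i, r i) / v)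
            * (\<Prod>k\<in>{i..<j-1}. Wr n D u k (r k) (w (Suc k, r (Suc k)) / v)))
         / (\<Prod>k\<in>{i..<j}. Wr n D u k (r k) (w (k, r k)))
         * (\<Prod>k\<in>{i..<j}. Zfun D v k (w (k, r k)))
         * (w (i, r i) / w (j-1, r (j-1)))))"

definition fcoef :: "nat \<Rightarrow> tdiv \<Rightarrow> nat \<Rightarrow> nat \<Rightarrow> complex \<Rightarrow> nat list \<Rightarrow> coeffn" where
  "fcoef n D j i z rs = (\<lambda>v u. let w = (\<lambda>p. (u p)^2); r = (\<lambda>k. rs ! (k - i)) in
      (-1) powi (int i - int j + 1) * v powi (int i - int j)
      * (\<Prod>k\<in>{i+1..j}. \<Prod>t\<in>{1..acoef n D k}. inverse (u (k,t)))
      * (1 / (1 - z / (v ^ (i+2) * w (i, r i)))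
         * (Wfun n D u j (v * w (j-1, r (j-1)))
            * (\<Prod>k\<in>{i+1..<j}. Wr n D u k (r k) (v * w (k-1, r (k-1)))))
         / (\<Prod>k\<in>{i..<j}. Wr n D u k (r k) (w (k, r k)))
         * (w (j-1, r (j-1)) / w (i, r i))))"

definition eop :: "nat \<Rightarrow> tdiv \<Rightarrow> nat \<Rightarrow> nat \<Rightarrow> complex \<Rightarrow> opr" where
  "eop n D i j z = (if i = j then oscal (\<lambda>v u. 1) else if i < j then
      map (\<lambda>rs. (ecoef n D i j z rs, dshift i j rs (-1))) (rtuples n D i j) else [])"

definition fop :: "nat \<Rightarrow> tdiv \<Rightarrow> nat \<Rightarrow> nat \<Rightarrow> complex \<Rightarrow> opr" where
  "fop n D j i z = (if i = j then oscal (\<lambda>v u. 1) else if i < j then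
      map (\<lambda>rs. (fcoef n D j i z rs, dshift i j rs 1)) (rtuples n D i j) else [])"

definition Lax :: "nat \<Rightarrow> tdiv \<Rightarrow> nat \<Rightarrow> nat \<Rightarrow> complex \<Rightarrow> opr" where
  "Lax n D \<alpha> \<beta> z = concat (map (\<lambda>i. omul (omul (fop n D \<alpha> i z) (oscal (gfun n D i z))) (eop n D i \<beta> z))
      [1..<Suc (min \<alpha> \<beta>)])"

definition Dpp :: "nat \<Rightarrow> tdiv \<Rightarrow> tdiv" where
  "Dpp n D = \<lparr>pts = butlast (pts D), mup = mup D,
              mum = (\<lambda>j. mum D j + varpi n (fst (last (pts D))) j)\<rparr>"

definition set_last_x :: "tdiv \<Rightarrow> complex \<Rightarrow> tdiv" where
  "set_last_x D y = D\<lparr>pts := butlast (pts D) @ [(fst (last (pts D)), fst (snd (last (pts D))), y)]\<rparr>"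

end

theory Submission
  imports Defs
begin

inductive convop :: "(complex \<Rightarrow> opr) \<Rightarrow> opr \<Rightarrow> bool" where
  cnil: "convop (\<lambda>y. []) []"
| ccons: "(\<And>v u. ((\<lambda>y. a y v u) \<longlongrightarrow> a' v u) (at 0)) \<Longrightarrow> convop A B
     \<Longrightarrow> convop (\<lambda>y. (a y, k) # A y) ((a', k) # B)"

lemma convop_const: "convop (\<lambda>y. A) A"
proof (induction A)
  case Nil then show ?case using cnil by simp
next
  case (Cons x A)
  obtain a k where "x = (a,k)" by (cases x)
  then show ?case using ccons[of "\<lambda>y. a" a "\<lambda>y. A" A k] Cons by simp
qed

lemma convop_append: "convop A B \<Longrightarrow> convop C E \<Longrightarrow> convop (\<lambda>y. A y @ C y) (B @ E)"
proof (induction rule: convop.induct)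
  case cnil then show ?case by simp
next
  case (ccons a a' A B k)
  then show ?case using convop.ccons[of a a' "\<lambda>y. A y @ C y" "B @ E" k] by simp
qed

lemma convop_map:
  assumes "convop B B'" and "\<And>v u. ((\<lambda>y. a y v u) \<longlongrightarrow> a' v u) (at 0)"
  shows "convop (\<lambda>y. map (\<lambda>(b,l). ((\<lambda>v u. a y v u * b v (act v k u)), (\<lambda>p. k p + l p))) (B y))
                (map (\<lambda>(b,l). ((\<lambda>v u. a' v u * b v (act v k u)), (\<lambda>p. k p + l p))) B')"
  using assms(1)
proof (induction rule: convop.induct)
  case cnil then show ?case by (simp add: convop.cnil)
next
  case (ccons b b' A B l)
  have "((\<lambda>y. a y v u * b y v (act v k u)) \<longlongrightarrow> a' v u * b' v (act v k u)) (at 0)" for v u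
    using assms(2) ccons(1) by (intro tendsto_mult) auto
  then show ?case
    using convop.ccons[of "\<lambda>y v u. a y v u * b y v (act v k u)" "\<lambda>v u. a' v u * b' v (act v k u)"]
      ccons by simp
qed

lemma convop_omul: "convop A A' \<Longrightarrow> convop B B' \<Longrightarrow> convop (\<lambda>y. omul (A y) (B y)) (omul A' B')"
proof (induction rule: convop.induct)
  case cnil then show ?case by (simp add: omul_def convop.cnil)
next
  case (ccons a a' A A' k)
  have e1: "omul ((a y, k) # A y) (B y) = map (\<lambda>(b,l). ((\<lambda>v u. a y v u * b v (act v k u)), (\<lambda>p. k p + l p))) (B y) @ omul (A y) (B y)" for y
    by (simp add: omul_def)
  have e2: "omul ((a', k) # A') B' = map (\<lambda>(b,l). ((\<lambda>v u. a' v u * b v (act v k u)), (\<lambda>p. k p + l p))) B' @ omul A' B'"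
    by (simp add: omul_def)
  show ?case unfolding e1 e2
    by (rule convop_append[OF convop_map]) (use ccons in auto)
qed

lemma convop_concat:
  "(\<And>i. i \<in> set xs \<Longrightarrow> convop (\<lambda>y. F y i) (F' i)) \<Longrightarrow>
   convop (\<lambda>y. concat (map (F y) xs)) (concat (map F' xs))"
proof (induction xs)
  case Nil then show ?case by (simp add: convop.cnil)
next
  case (Cons x xs)
  then show ?case using convop_append[of "\<lambda>y. F y x" "F' x" "\<lambda>y. concat (map (F y) xs)"] by simp
qed

lemma convop_maplist:
  "(\<And>x v u. x \<in> set xs \<Longrightarrow> ((\<lambda>y. c y x v u) \<longlongrightarrow> c' x v u) (at 0)) \<Longrightarrow>
   convop (\<lambda>y. map (\<lambda>x. (c y x, k x)) xs) (map (\<lambda>x. (c' x, k x)) xs)"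
proof (induction xs)
  case Nil then show ?case by (simp add: convop.cnil)
next
  case (Cons x xs)
  then show ?case using convop.ccons[of "\<lambda>y. c y x" "c' x"] by simp
qed

lemma convop_oscal:
  "(\<And>v u. ((\<lambda>y. c y v u) \<longlongrightarrow> c' v u) (at 0)) \<Longrightarrow> convop (\<lambda>y. oscal (c y)) (oscal c')"
  unfolding oscal_def by (rule convop.ccons) (auto intro: convop.cnil)

lemma convop_ocoeff: "convop A B \<Longrightarrow> ((\<lambda>y. ocoeff (A y) m v u) \<longlongrightarrow> ocoeff B m v u) (at 0)"
proof (induction rule: convop.induct)
  case cnil then show ?case by (simp add: ocoeff_def)
next
  case (ccons a a' A B k)
  then show ?case by (cases "k = m") (auto simp: ocoeff_def intro!: tendsto_add)
qed


lemma sl0: "(\<And>x. x \<in> set xs \<Longrightarrow> f x = 0) \<Longrightarrow> sum_list (map f xs) = (0::int)"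
  by (induction xs) auto

lemma pts_set_last: "pts D \<noteq> [] \<Longrightarrow> pts (set_last_x D y) = butlast (pts D) @ [(fst (last (pts D)), fst (snd (last (pts D))), y)]"
  by (simp add: set_last_x_def)

lemma lam_set_last: "pts D \<noteq> [] \<Longrightarrow> lam n (set_last_x D y) = lam n D"
proof -
  assume ne: "pts D \<noteq> []"
  have e: "pts D = butlast (pts D) @ [last (pts D)]" using ne by simp
  show ?thesis
    apply (rule ext)
    apply (subst (2) lam_def)
    apply (subst e)
    by (simp add: lam_def pts_set_last[OF ne])
qed

lemma gamma_last:
  assumes "trig_divisor n D" "pts D \<noteq> []" "1 \<le> fst (last (pts D))"
  shows "fst (snd (last (pts D))) = 1" "fst (last (pts D)) < n"
proof -
  have "last (pts D) \<in> set (pts D)" using assms(2) by simp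
  then obtain i g x where L: "last (pts D) = (i,g,x)" "(i,g,x) \<in> set (pts D)" by (metis prod_cases3)
  then show "fst (snd (last (pts D))) = 1" "fst (last (pts D)) < n"
    using assms(1,3) unfolding trig_divisor_def by auto
qed

lemma lam_Dpp:
  assumes "trig_divisor n D" "pts D \<noteq> []" "1 \<le> fst (last (pts D))"
  shows "lam n (Dpp n D) j + mum (Dpp n D) j = lam n D j + mum D j"
proof -
  have e: "pts D = butlast (pts D) @ [last (pts D)]" using assms(2) by simp
  have "lam n D j = lam n (Dpp n D) j + fst (snd (last (pts D))) * varpi n (fst (last (pts D))) j"
    unfolding lam_def Dpp_def by (subst e) simp
  then show ?thesis using gamma_last[OF assms] by (simp add: Dpp_def)
qed

lemma mu_set_last[simp]: "mup (set_last_x D y) = mup D" "mum (set_last_x D y) = mum D"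
  by (simp_all add: set_last_x_def)

lemma acoef_set_last: "pts D \<noteq> [] \<Longrightarrow> acoef n (set_last_x D y) = acoef n D"
proof -
  assume ne: "pts D \<noteq> []"
  have h: "integ_witness n (set_last_x D y) = integ_witness n D"
    by (rule ext) (simp add: integ_witness_def lam_set_last[OF ne])
  show ?thesis unfolding acoef_def[abs_def] h ..
qed

lemma acoef_Dpp:
  assumes "trig_divisor n D" "pts D \<noteq> []" "1 \<le> fst (last (pts D))"
  shows "acoef n (Dpp n D) = acoef n D"
proof -
  have h: "integ_witness n (Dpp n D) = integ_witness n D"
  proof (rule ext)
    fix a
    have "lam n (Dpp n D) j + mup (Dpp n D) j + mum (Dpp n D) j = lam n D j + mup D j + mum D j" for j
      using lam_Dpp[OF assms, of j] by (simp add: Dpp_def)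
    then show "integ_witness n (Dpp n D) a = integ_witness n D a" by (simp add: integ_witness_def)
  qed
  show ?thesis unfolding acoef_def[abs_def] h ..
qed

lemma same_acoef:
  assumes "acoef n D1 = acoef n D2"
  shows "Wfun n D1 = Wfun n D2" "Wr n D1 = Wr n D2" "rtuples n D1 = rtuples n D2"
    unfolding Wfun_def[abs_def] Wr_def[abs_def] rtuples_def[abs_def] assms by (rule refl)+

lemma same_acoef2:
  assumes "acoef n D1 = acoef n D2"
  shows "fcoef n D1 = fcoef n D2"
  unfolding fcoef_def[abs_def] same_acoef[OF assms] assms ..

lemma same_acoef3:
  assumes "acoef n D1 = acoef n D2"
  shows "fop n D1 = fop n D2"
  unfolding fop_def[abs_def] same_acoef[OF assms] same_acoef2[OF assms] ..

lemma Zfun_set_last: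
  assumes "pts D \<noteq> []"
  shows "Zfun (set_last_x D y) v i x = Zfun (Dpp n D) v i x *
    (if fst (last (pts D)) = i then (1 - v powi (- int i) * y / x) powi (fst (snd (last (pts D)))) else 1)"
  by (simp add: Zfun_def pts_set_last[OF assms] Dpp_def)

lemma Zfun_lim:
  assumes "pts D \<noteq> []"
  shows "((\<lambda>y. Zfun (set_last_x D y) v i x) \<longlongrightarrow> Zfun (Dpp n D) v i x) (at 0)"
proof -
  have h: "((\<lambda>y. (1 - v powi (- int i) * y / x) powi g) \<longlongrightarrow> 1) (at 0)" for g
  proof -
    have "((\<lambda>y. 1 - v powi (- int i) * y / x) \<longlongrightarrow> 1 - v powi (- int i) * 0 / x) (at 0)"
    proof (cases "x = 0")
      case True then show ?thesis by simp
    next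
      case False then show ?thesis by (intro tendsto_intros) auto
    qed
    then have "((\<lambda>y. (1 - v powi (- int i) * y / x) powi g) \<longlongrightarrow> (1 - v powi (- int i) * 0 / x) powi g) (at 0)"
      by (rule tendsto_power_int) simp
    then show ?thesis by simp
  qed
  show ?thesis
  proof (cases "fst (last (pts D)) = i")
    case True
    show ?thesis using tendsto_mult[OF tendsto_const h[of "fst (snd (last (pts D)))"], of "Zfun (Dpp n D) v i x"]
      by (simp add: Zfun_set_last[OF assms, where n=n] True)
  next
    case False
    then show ?thesis by (simp add: Zfun_set_last[OF assms, where n=n])
  qed
qed

lemma shape_lim: "((Zp::complex\<Rightarrow>complex) \<longlongrightarrow> Z0) (at 0) \<Longrightarrow> ((\<lambda>y. X * (G * Zp y * F)) \<longlongrightarrow> X * (G * Z0 * F)) (at (0::complex))"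
  by (auto intro!: tendsto_mult tendsto_const)

lemma ecoef_lim:
  assumes "trig_divisor n D" "pts D \<noteq> []" "1 \<le> fst (last (pts D))"
  shows "((\<lambda>y. ecoef n (set_last_x D y) i j z rs v u) \<longlongrightarrow> ecoef n (Dpp n D) i j z rs v u) (at 0)"
proof -
  have a1: "acoef n (set_last_x D y) = acoef n (Dpp n D)" for y
    using acoef_set_last[OF assms(2)] acoef_Dpp[OF assms] by simp
  have m1: "mup (set_last_x D y) = mup (Dpp n D)" for y by (simp add: Dpp_def)
  have zl: "((\<lambda>y. \<Prod>k\<in>{i..<j}. Zfun (set_last_x D y) v k ((u (k, rs ! (k - i)))^2))
     \<longlongrightarrow> (\<Prod>k\<in>{i..<j}. Zfun (Dpp n D) v k ((u (k, rs ! (k - i)))^2))) (at 0)"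
    by (intro tendsto_prod Zfun_lim[OF assms(2)])
  show ?thesis
    unfolding ecoef_def Let_def a1 m1 same_acoef[OF a1]
    by (rule shape_lim[OF zl])
qed

lemma pw_lim: "((\<lambda>y. (1 - c * y / x) powi g) \<longlongrightarrow> (1::complex)) (at 0)"
proof -
  have "((\<lambda>y. 1 - c * y / x) \<longlongrightarrow> 1 - c * 0 / x) (at 0)"
  proof (cases "x = 0")
    case True then show ?thesis by simp
  next
    case False then show ?thesis by (intro tendsto_intros) auto
  qed
  then have "((\<lambda>y. (1 - c * y / x) powi g) \<longlongrightarrow> (1 - c * 0 / x) powi g) (at 0)"
    by (rule tendsto_power_int) simp
  then show ?thesis by simp
qed

lemma lamx_set_last:
  assumes "pts D \<noteq> []"
  shows "lamx n (set_last_x D y) x i = lamx n (Dpp n D) x i +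
     (if y = x then fst (snd (last (pts D))) * varpi n (fst (last (pts D))) i else 0)"
  by (simp add: lamx_def pts_set_last[OF assms] Dpp_def)

lemma gfun_lim:
  assumes "trig_divisor n D" "pts D \<noteq> []" "1 \<le> fst (last (pts D))"
  shows "((\<lambda>y. gfun n (set_last_x D y) i z v u) \<longlongrightarrow> gfun n (Dpp n D) i z v u) (at 0)"
proof -
  define S where "S = (\<lambda>p. snd (snd p)) ` set (butlast (pts D))"
  define e where "e = - (fst (snd (last (pts D))) * varpi n (fst (last (pts D))) i)"
  define XP where "XP = (\<Prod>x\<in>S. (1 - x / z) powi (- lamx n (Dpp n D) x i))"
  have fS: "finite S" by (simp add: S_def)
  have a1: "acoef n (set_last_x D y) = acoef n (Dpp n D)" for y
    using acoef_set_last[OF assms(2)] acoef_Dpp[OF assms] by simp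
  have m1: "mup (set_last_x D y) = mup (Dpp n D)" for y by (simp add: Dpp_def)
  define G0 where "G0 = (\<Prod>t\<in>{1..acoef n (Dpp n D) i}. inverse (u (i,t))) * (\<Prod>t\<in>{1..acoef n (Dpp n D) (i-1)}. u (i-1,t))
     * z powi (mup (Dpp n D) i)
     * Wfun n (Dpp n D) u i (v powi (- int i) * z) / Wfun n (Dpp n D) u (i-1) (v powi (- int i - 1) * z)"
  have gp: "gfun n (Dpp n D) i z v u = G0 * XP"
    unfolding gfun_def G0_def XP_def S_def by (simp add: Dpp_def)
  have gy: "gfun n (set_last_x D y) i z v u = G0 * ((1 - 1 * y / z) powi e * XP)" if yS: "y \<notin> S" for y
  proof -
    have im: "(\<lambda>p. snd (snd p)) ` set (pts (set_last_x D y)) = insert y S"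
      by (auto simp: pts_set_last[OF assms(2)] S_def)
    have l1: "lamx n (set_last_x D y) x i = lamx n (Dpp n D) x i" if "x \<in> S" for x
      using lamx_set_last[OF assms(2), of n y x i] that yS by auto
    have l0: "lamx n (Dpp n D) y i = 0"
      unfolding lamx_def Dpp_def using yS by (auto simp: S_def intro!: sl0) (metis image_eqI snd_conv)
    have l2: "lamx n (set_last_x D y) y i = - e"
      using lamx_set_last[OF assms(2), of n y y i] l0 by (simp add: e_def)
    have "(\<Prod>x\<in>insert y S. (1 - x / z) powi (- lamx n (set_last_x D y) x i))
       = (1 - y / z) powi e * XP"
      using fS yS l1 l2 by (simp add: XP_def)
    then show ?thesis
      unfolding gfun_def G0_def im a1 m1 same_acoef[OF a1] by simp
  qed
  have ev: "eventually (\<lambda>y. y \<notin> S) (at (0::complex))"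
    using eventually_ball_finite[OF fS, where net="at 0" and P="\<lambda>y x. y \<noteq> x"]
    by (auto simp: eventually_neq_at_within elim: eventually_mono)
  have "((\<lambda>y. G0 * ((1 - 1 * y / z) powi e * XP)) \<longlongrightarrow> G0 * (1 * XP)) (at 0)"
    by (intro tendsto_mult tendsto_const pw_lim)
  then have "((\<lambda>y. gfun n (set_last_x D y) i z v u) \<longlongrightarrow> G0 * (1 * XP)) (at 0)"
    by (rule Lim_transform_eventually) (use ev gy in \<open>auto elim: eventually_mono\<close>)
  then show ?thesis by (simp add: gp)
qed

lemma eop_conv:
  assumes "trig_divisor n D" "pts D \<noteq> []" "1 \<le> fst (last (pts D))"
  shows "convop (\<lambda>y. eop n (set_last_x D y) i j z) (eop n (Dpp n D) i j z)"
proof -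
  have a1: "acoef n (set_last_x D y) = acoef n (Dpp n D)" for y
    using acoef_set_last[OF assms(2)] acoef_Dpp[OF assms] by simp
  have r: "rtuples n (set_last_x D y) = rtuples n (Dpp n D)" for y
    using same_acoef(3)[OF a1] .
  show ?thesis
  proof (cases "i = j")
    case True then show ?thesis by (simp add: eop_def convop_const)
  next
    case False
    show ?thesis
    proof (cases "i < j")
      case True
      show ?thesis using False True unfolding eop_def r
        by simp (rule convop_maplist, rule ecoef_lim[OF assms])
    next
      case F2: False
      then show ?thesis using False by (simp add: eop_def convop_const)
    qed
  qed
qed

theorem proposition3p21:
  fixes n :: nat and D :: tdiv
  assumes "trig_divisor n D"
    and "integral n D"
    and "pts D \<noteq> []"
    and "1 \<le> fst (last (pts D))"
  shows "\<forall>\<alpha>\<in>{1..n}. \<forall>\<beta>\<in>{1..n}. \<forall>z m v u.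
     ((\<lambda>y. ocoeff (Lax n (set_last_x D y) \<alpha> \<beta> z) m v u)
        \<longlongrightarrow> ocoeff (Lax n (Dpp n D) \<alpha> \<beta> z) m v u) (at 0)"
proof (intro ballI allI)
  fix \<alpha> \<beta> z m v u
  have as: "trig_divisor n D" "pts D \<noteq> []" "1 \<le> fst (last (pts D))" using assms by auto
  have a1: "acoef n (set_last_x D y) = acoef n (Dpp n D)" for y
    using acoef_set_last[OF as(2)] acoef_Dpp[OF as] by simp
  have f: "fop n (set_last_x D y) = fop n (Dpp n D)" for y
    using same_acoef3[OF a1] .
  have "convop (\<lambda>y. Lax n (set_last_x D y) \<alpha> \<beta> z) (Lax n (Dpp n D) \<alpha> \<beta> z)"
    unfolding Lax_def f
    by (rule convop_concat, rule convop_omul, rule convop_omul, rule convop_const,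
        rule convop_oscal, rule gfun_lim[OF as], rule eop_conv[OF as])
  then show "((\<lambda>y. ocoeff (Lax n (set_last_x D y) \<alpha> \<beta> z) m v u)
        \<longlongrightarrow> ocoeff (Lax n (Dpp n D) \<alpha> \<beta> z) m v u) (at 0)"
    by (rule convop_ocoeff)
qed

end
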